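(* Let $n=2$, let $G_1,G_2$ satisfy the standing assumptions, and let $f$ be an anonymous BIC SCF, with associated constants $c_1^\pm(f),c_2^\pm(f)$. Then $$p_1c_2^+(f)-(1-p_1)c_2^-(f)\le p_1^2\qquad\text{and}\qquad p_2c_1^+(f)-(1-p_2)c_1^-(f)\le p_2^2.$$
   Context: There are $n\ge 2$ agents $N=\{1,\dots,n\}$ choosing between a Reform $R$ and the Status quo $S$. Agent $i$ gets utility $0$ if $S$ is chosen and utility $v_i\in\mathbb{R}$ if $R$ is chosen. Values are independent random variables $\tilde v_1,\dots,\tilde v_n$, $\tilde v_i\sim G_i$ (Borel probability distributions on $\mathbb{R}$, $G_i(0)=\Pr(\tilde v_i\le 0)$). Standing assumptions: all $\tilde v_i$ have the same support $V$ with $0\notin V$; $\mathbb{E}|\tilde v_i|<\infty$; $p_i:=1-G_i(0)\in(0,1)$. An SCF is a Borel measurable $f:V^n\to[0,1]$ (probability of choosing $R$). $f$ is anonymous if $f(v)=f(\pi v)$ for every $v\in V^n$ and every permutation $\pi$ of $N$, where $\pi v=(v_{\pi(1)},\dots,v_{\pi(n)})$. $f$ is BIC if for every $i$ and all $v_i,v_i'\in V$: $v_i\,\mathbb{E}(f(v_i,\tilde v_{-i}))\ge v_i\,\mathbb{E}(f(v_i',\tilde v_{-i}))$ (expectation over $\tilde v_{-i}=(\tilde v_j)_{j\neq i}$). For a BIC $f$, the map $v_i\mapsto \mathbb{E}(f(v_i,\tilde v_{-i}))$ is constant on $\{v_i\in V:v_i<0\}$ and on $\{v_i\in V: v_i>0\}$;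 $c_i^-(f)$ and $c_i^+(f)$ denote these two constant values, respectively. *)

theory Defs
  imports "HOL-Probability.Probability"
begin

definition support :: "real measure \<Rightarrow> real set" where
  "support M = {x. \<forall>e>0. 0 < measure M {x - e <..< x + e}}"

end

theory Submission
  imports Defs
begin

lemma support_open:
  assumes "finite_measure M" "sets M = sets borel"
  shows "open (- support M)"
proof (rule openI)
  interpret finite_measure M by fact
  fix x assume "x \<in> - support M"
  then obtain e where e: "e > 0" "\<not> 0 < measure M {x - e <..< x + e}"
    unfolding support_def by auto
  hence m0: "measure M {x - e <..< x + e} = 0" by (simp add: measure_nonneg order_less_le)
  show "\<exists>d>0. ball x d \<subseteq> - support M"
  proof (intro exI[of _ "e/2"] conjI subsetI)
    fix y assume "y \<in> ball x (e/2)"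
    hence sub: "{y - e/2 <..< y + e/2} \<subseteq> {x - e <..< x + e}"
      by (auto simp: dist_real_def abs_real_def split: if_splits)
    have "measure M {y - e/2 <..< y + e/2} \<le> measure M {x - e <..< x + e}"
      by (rule finite_measure_mono[OF sub]) (simp add: assms(2))
    with m0 have "\<not> 0 < measure M {y - e/2 <..< y + e/2}" by simp
    hence ny: "\<not> 0 < measure M {y - e/2 <..< y + e/2}" .
    show "y \<in> - support M"
    proof
      assume "y \<in> support M"
      hence d: "\<forall>d>0. 0 < measure M {y - d <..< y + d}" by (simp add: support_def)
      have "0 < e/2" using e(1) by simp
      with d ny show False by blast
    qed
  qed (use e in auto)
qed

lemma support_null:
  assumes "finite_measure M" "sets M = sets borel"
  shows "- support M \<in> null_sets M"
proof -
  interpret finite_measure M by fact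
  define I where "I = {(a,b). a \<in> \<rat> \<and> b \<in> \<rat> \<and> measure M {a<..<b} = 0}"
  have cI: "countable I"
  proof (rule countable_subset)
    show "I \<subseteq> \<rat> \<times> \<rat>" by (auto simp: I_def)
    show "countable (\<rat> \<times> (\<rat>::real set))" by (intro countable_SIGMA countable_rat)
  qed
  have N: "(\<Union>(a,b)\<in>I. {a<..<b}) \<in> null_sets M"
  proof (rule null_sets_UN')
    show "countable I" by fact
    fix i assume "i \<in> I"
    then obtain a b where ab: "i = (a,b)" "measure M {a<..<b} = 0" by (auto simp: I_def)
    have "{a<..<b} \<in> null_sets M"
      by (rule null_setsI) (simp_all add: emeasure_eq_measure ab(2) assms(2))
    with ab(1) show "(case i of (a, b) \<Rightarrow> {a<..<b}) \<in> null_sets M" by simp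
  qed
  have sub: "- support M \<subseteq> (\<Union>(a,b)\<in>I. {a<..<b})"
  proof
    fix x assume "x \<in> - support M"
    then obtain e where e: "e > 0" "\<not> 0 < measure M {x - e <..< x + e}"
      unfolding support_def by auto
    hence m0: "measure M {x - e <..< x + e} = 0" by (simp add: measure_nonneg order_less_le)
    obtain a where a: "a \<in> \<rat>" "x - e < a" "a < x" using Rats_dense_in_real[of "x-e" x] e by auto
    obtain b where b: "b \<in> \<rat>" "x < b" "b < x + e" using Rats_dense_in_real[of x "x+e"] e by auto
    have "measure M {a<..<b} \<le> measure M {x - e <..< x + e}"
      by (rule finite_measure_mono) (use a b assms(2) in auto)
    hence "measure M {a<..<b} = 0" using m0 measure_nonneg[of M "{a<..<b}"] by linarith
    with a b have "(a,b) \<in> I" by (auto simp: I_def)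
    moreover have "x \<in> (case (a,b) of (a, b) \<Rightarrow> {a<..<b})" using a b by simp
    ultimately show "x \<in> (\<Union>(a,b)\<in>I. {a<..<b})" by (rule UN_I)
  qed
  have "- support M \<in> sets M"
    using support_open[OF assms] assms(2) by simp
  thus ?thesis using null_sets_subset[OF N _ sub] by simp
qed

lemma key:
  fixes G :: "real measure" and V :: "real set" and g :: "real \<Rightarrow> real \<Rightarrow> real" and cp cm :: real
  assumes PS: "prob_space G" and SG: "sets G = sets borel" and supp: "support G = V" and z: "0 \<notin> V"
    and gm: "(\<lambda>(x,y). g x y) \<in> borel_measurable (borel \<Otimes>\<^sub>M borel)"
    and gb: "\<And>x y. 0 \<le> g x y \<and> g x y \<le> 1"
    and gz: "\<And>x y. x \<notin> V \<Longrightarrow> g x y = 0"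
    and gs: "\<And>x y. g x y = g y x"
    and cp: "\<And>v. v \<in> V \<Longrightarrow> 0 < v \<Longrightarrow> (\<integral>x. g x v \<partial>G) = cp"
    and cm: "\<And>v. v \<in> V \<Longrightarrow> v < 0 \<Longrightarrow> (\<integral>x. g x v \<partial>G) = cm"
  shows "(1 - measure G {..0}) * cp - (1 - (1 - measure G {..0})) * cm \<le> (1 - measure G {..0})^2"
proof -
  interpret prob_space G by fact
  interpret PP: pair_prob_space G G
    by (simp add: pair_prob_space_def pair_sigma_finite_def prob_space_imp_sigma_finite PS prob_space_axioms)
  have spG: "space G = UNIV" using sets_eq_imp_space_eq[OF SG] by simp
  have Vs: "V \<in> sets borel" using support_open[OF finite_measure_axioms SG] supp
    by (metis borel_open sets.compl_sets space_borel double_complement Compl_eq_Diff_UNIV)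
  define P where "P = V \<inter> {0<..}"
  define N where "N = V \<inter> {..<0}"
  have Ps[measurable]: "P \<in> sets G" using Vs SG by (simp add: P_def)
  have Ns[measurable]: "N \<in> sets G" using Vs SG by (simp add: N_def)
  have gmG[measurable]: "(\<lambda>(x,y). g x y) \<in> borel_measurable (G \<Otimes>\<^sub>M G)"
    using gm by (subst measurable_cong_sets[OF sets_pair_measure_cong[OF SG SG] refl])
  have gsec[measurable]: "(\<lambda>x. g x v) \<in> borel_measurable G" for v
    using measurable_Pair1[OF gmG, of v] spG by simp
  have intmeas: "(\<lambda>v. \<integral>x. indicator A x * g x v \<partial>G) \<in> borel_measurable G"
    if [measurable]: "A \<in> sets G" for A
  proof (rule borel_measurable_lebesgue_integral[where f="\<lambda>v x. indicator A x * g x v"])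
    show "(\<lambda>(v, x). indicator A x * g x v) \<in> borel_measurable (G \<Otimes>\<^sub>M G)"
      by measurable
  qed
  have AEV: "AE x in G. x \<in> V"
    by (rule AE_I'[OF support_null[OF finite_measure_axioms SG]]) (use supp in auto)
  have mpos: "measure G {0<..} = 1 - measure G {..0}"
  proof -
    have "measure G (space G - {..0}) = 1 - measure G {..0}"
      by (rule prob_compl) (simp add: SG)
    moreover have "space G - {..0} = ({0<..}::real set)" using spG by auto
    ultimately show ?thesis by simp
  qed
  have mP: "measure G P = 1 - measure G {..0}"
  proof -
    have "measure G P = measure G {0<..}"
      by (rule measure_eq_AE) (use AEV Vs in \<open>auto simp: P_def SG\<close>)
    thus ?thesis using mpos by simp
  qed
  have mN: "measure G N = measure G {..0}"
  proof (rule measure_eq_AE)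
    show "AE x in G. (x \<in> N) = (x \<in> {..0})"
      using AEV by eventually_elim (use z in \<open>auto simp: N_def less_le\<close>)
  qed (use Vs in \<open>auto simp: N_def SG\<close>)
  have intb: "integrable G h" if "h \<in> borel_measurable G" "\<And>x. \<bar>h x\<bar> \<le> 1" for h :: "real \<Rightarrow> real"
    by (rule integrable_const_bound[where B=1]) (use that in auto)
  have intb2: "integrable (G \<Otimes>\<^sub>M G) h" if "h \<in> borel_measurable (G \<Otimes>\<^sub>M G)" "\<And>x. \<bar>h x\<bar> \<le> 1"
    for h :: "real \<times> real \<Rightarrow> real"
    by (rule PP.integrable_const_bound[where B=1]) (use that in auto)
  let ?iP = "indicator P :: real \<Rightarrow> real"
  let ?iN = "indicator N :: real \<Rightarrow> real"
  have intIP: "integrable G ?iP"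
  proof (rule intb)
    show "?iP \<in> borel_measurable G" by measurable
    show "\<bar>?iP v\<bar> \<le> 1" for v by (auto simp: indicator_def)
  qed
  have split: "g x v = ?iP x * g x v + ?iN x * g x v" for x v
  proof (cases "x \<in> V")
    case True
    hence "x \<noteq> 0" using z by auto
    hence "0 < x \<or> x < 0" by linarith
    thus ?thesis using True by (auto simp: P_def N_def indicator_def)
  next
    case False
    show ?thesis using gz[OF False] by simp
  qed
  have absI: "\<bar>(\<integral>x. indicator A x * g x v \<partial>G)\<bar> \<le> 1" if "A \<in> sets G" for A v
  proof -
    have "(\<integral>x. indicator A x * g x v \<partial>G) \<le> (\<integral>x. 1 \<partial>G)"
      by (intro Bochner_Integration.integral_mono intb) (use gb that in \<open>auto simp: indicator_def\<close>)
    moreover have "0 \<le> (\<integral>x. indicator A x * g x v \<partial>G)"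
      by (intro Bochner_Integration.integral_nonneg) (use gb in \<open>auto simp: indicator_def\<close>)
    ultimately show ?thesis using prob_space by simp
  qed
  have intI: "integrable G (\<lambda>x. indicator A x * g x v)" if "A \<in> sets G" for A v
    by (intro intb) (use gb that in \<open>auto simp: indicator_def\<close>)
  have intO: "integrable G (\<lambda>v. indicator B v * (\<integral>x. indicator A x * g x v \<partial>G))"
    if [measurable]: "A \<in> sets G" "B \<in> sets G" for A B
  proof (rule intb)
    show "(\<lambda>v. indicator B v * (\<integral>x. indicator A x * g x v \<partial>G)) \<in> borel_measurable G"
      using intmeas[OF that(1)] by measurable
    show "\<bar>indicator B v * (\<integral>x. indicator A x * g x v \<partial>G)\<bar> \<le> 1" for v
      using absI[OF that(1), of v] by (auto simp: indicator_def)
  qed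
  define T1 where "T1 = (\<integral>v. ?iP v * (\<integral>x. ?iP x * g x v \<partial>G) \<partial>G)"
  define T2 where "T2 = (\<integral>v. ?iN v * (\<integral>x. ?iN x * g x v \<partial>G) \<partial>G)"
  define X where "X = (\<integral>v. ?iN v * (\<integral>x. ?iP x * g x v \<partial>G) \<partial>G)"
  define Y where "Y = (\<integral>v. ?iP v * (\<integral>x. ?iN x * g x v \<partial>G) \<partial>G)"
  have inner: "(\<integral>x. g x v \<partial>G) = (\<integral>x. ?iP x * g x v \<partial>G) + (\<integral>x. ?iN x * g x v \<partial>G)" for v
    by (subst split) (intro Bochner_Integration.integral_add intI Ps Ns)
  have E1: "measure G P * cp = T1 + Y"
  proof -
    have "measure G P * cp = (\<integral>v. ?iP v * cp \<partial>G)" using spG by simp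
    also have "\<dots> = (\<integral>v. ?iP v * (\<integral>x. g x v \<partial>G) \<partial>G)"
      by (rule Bochner_Integration.integral_cong) (auto simp: indicator_def P_def cp)
    also have "\<dots> = (\<integral>v. ?iP v * (\<integral>x. ?iP x * g x v \<partial>G) + ?iP v * (\<integral>x. ?iN x * g x v \<partial>G) \<partial>G)"
      by (simp add: inner distrib_left)
    also have "\<dots> = T1 + Y" unfolding T1_def Y_def
      by (intro Bochner_Integration.integral_add intO Ps Ns)
    finally show ?thesis .
  qed
  have E2: "measure G N * cm = X + T2"
  proof -
    have "measure G N * cm = (\<integral>v. ?iN v * cm \<partial>G)" using spG by simp
    also have "\<dots> = (\<integral>v. ?iN v * (\<integral>x. g x v \<partial>G) \<partial>G)"
      by (rule Bochner_Integration.integral_cong) (auto simp: indicator_def N_def cm)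
    also have "\<dots> = (\<integral>v. ?iN v * (\<integral>x. ?iP x * g x v \<partial>G) + ?iN v * (\<integral>x. ?iN x * g x v \<partial>G) \<partial>G)"
      by (simp add: inner distrib_left)
    also have "\<dots> = X + T2" unfolding X_def T2_def
      by (intro Bochner_Integration.integral_add intO Ps Ns)
    finally show ?thesis .
  qed
  have T1le: "T1 \<le> measure G P * measure G P"
  proof -
    have "T1 \<le> (\<integral>v. ?iP v * measure G P \<partial>G)" unfolding T1_def
    proof (rule Bochner_Integration.integral_mono)
      show "integrable G (\<lambda>v. ?iP v * (\<integral>x. ?iP x * g x v \<partial>G))" by (intro intO Ps)
      show "integrable G (\<lambda>v. ?iP v * measure G P)"
      proof (rule intb)
        show "(\<lambda>v. ?iP v * measure G P) \<in> borel_measurable G" by measurable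
        show "\<bar>?iP v * measure G P\<bar> \<le> 1" for v by (auto simp: indicator_def)
      qed
      fix v
      have "(\<integral>x. ?iP x * g x v \<partial>G) \<le> (\<integral>x. ?iP x \<partial>G)"
        by (intro Bochner_Integration.integral_mono intI Ps intIP) (use gb in \<open>auto simp: indicator_def\<close>)
      also have "\<dots> = measure G P" using spG by simp
      finally show "?iP v * (\<integral>x. ?iP x * g x v \<partial>G) \<le> ?iP v * measure G P"
        by (intro mult_left_mono) auto
    qed
    also have "\<dots> = measure G P * measure G P" using spG by simp
    finally show ?thesis .
  qed
  have T2ge: "0 \<le> T2" unfolding T2_def
  proof (rule Bochner_Integration.integral_nonneg)
    fix v
    have "0 \<le> (\<integral>x. ?iN x * g x v \<partial>G)"
    proof (rule Bochner_Integration.integral_nonneg)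
      fix x show "0 \<le> ?iN x * g x v" using gb[of x v] by (simp add: indicator_def)
    qed
    thus "0 \<le> ?iN v * (\<integral>x. ?iN x * g x v \<partial>G)" by (simp add: indicator_def)
  qed
  have XY: "X = Y"
  proof -
    have "X = (\<integral>v. (\<integral>x. ?iN v * ?iP x * g x v \<partial>G) \<partial>G)" unfolding X_def
      by (simp add: mult.assoc)
    also have "\<dots> = (\<integral>x. (\<integral>v. ?iN v * ?iP x * g x v \<partial>G) \<partial>G)"
    proof (rule PP.Fubini_integral)
      show "integrable (G \<Otimes>\<^sub>M G) (\<lambda>(x, v). ?iN v * ?iP x * g x v)"
      proof (rule intb2)
        show "(\<lambda>(x, v). ?iN v * ?iP x * g x v) \<in> borel_measurable (G \<Otimes>\<^sub>M G)" by measurable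
        show "\<bar>(\<lambda>(x, v). ?iN v * ?iP x * g x v) xv\<bar> \<le> 1" for xv
          using gb by (auto simp: indicator_def split: prod.splits)
      qed
    qed
    also have "\<dots> = (\<integral>x. ?iP x * (\<integral>v. ?iN v * g v x \<partial>G) \<partial>G)"
    proof (rule Bochner_Integration.integral_cong[OF refl])
      fix x
      have "(\<integral>v. ?iN v * ?iP x * g x v \<partial>G) = (\<integral>v. ?iP x * (?iN v * g v x) \<partial>G)"
        by (rule Bochner_Integration.integral_cong[OF refl]) (simp add: gs[of x] mult_ac)
      also have "\<dots> = ?iP x * (\<integral>v. ?iN v * g v x \<partial>G)"
        by (rule integral_mult_right_zero)
      finally show "(\<integral>v. ?iN v * ?iP x * g x v \<partial>G) = ?iP x * (\<integral>v. ?iN v * g v x \<partial>G)" .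
    qed
    also have "\<dots> = Y" unfolding Y_def ..
    finally show ?thesis .
  qed
  have A1: "(1 - measure G {..0}) * cp = T1 + Y" using E1 mP by simp
  have A2: "(1 - (1 - measure G {..0})) * cm = X + T2" using E2 mN by simp
  have A3: "T1 \<le> (1 - measure G {..0})^2" using T1le mP by (simp add: power2_eq_square)
  show ?thesis using A1 A2 A3 T2ge XY by linarith
qed


theorem lemma2:
  fixes G1 G2 :: "real measure" and V :: "real set"
    and f :: "real \<Rightarrow> real \<Rightarrow> real"
    and c1p c1m c2p c2m :: real
  assumes G1: "prob_space G1" "sets G1 = sets borel"
      and G2: "prob_space G2" "sets G2 = sets borel"
      and supp1: "support G1 = V" and supp2: "support G2 = V"
      and zero_notin: "0 \<notin> V"
      and int1: "integrable G1 (\<lambda>x. x)" and int2: "integrable G2 (\<lambda>x. x)"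
      and p1: "0 < 1 - measure G1 {..0}" "1 - measure G1 {..0} < 1"
      and p2: "0 < 1 - measure G2 {..0}" "1 - measure G2 {..0} < 1"
      and meas: "(\<lambda>(x, y). f x y) \<in> borel_measurable (restrict_space borel (V \<times> V))"
      and range: "\<And>x y. x \<in> V \<Longrightarrow> y \<in> V \<Longrightarrow> 0 \<le> f x y \<and> f x y \<le> 1"
      and anon: "\<And>x y. x \<in> V \<Longrightarrow> y \<in> V \<Longrightarrow> f x y = f y x"
      and BIC1: "\<And>v v'. v \<in> V \<Longrightarrow> v' \<in> V \<Longrightarrow>
          v * (\<integral>y\<in>V. f v' y \<partial>G2) \<le> v * (\<integral>y\<in>V. f v y \<partial>G2)"
      and BIC2: "\<And>v v'. v \<in> V \<Longrightarrow> v' \<in> V \<Longrightarrow>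
          v * (\<integral>x\<in>V. f x v' \<partial>G1) \<le> v * (\<integral>x\<in>V. f x v \<partial>G1)"
      and c1p: "\<And>v. v \<in> V \<Longrightarrow> 0 < v \<Longrightarrow> (\<integral>y\<in>V. f v y \<partial>G2) = c1p"
      and c1m: "\<And>v. v \<in> V \<Longrightarrow> v < 0 \<Longrightarrow> (\<integral>y\<in>V. f v y \<partial>G2) = c1m"
      and c2p: "\<And>v. v \<in> V \<Longrightarrow> 0 < v \<Longrightarrow> (\<integral>x\<in>V. f x v \<partial>G1) = c2p"
      and c2m: "\<And>v. v \<in> V \<Longrightarrow> v < 0 \<Longrightarrow> (\<integral>x\<in>V. f x v \<partial>G1) = c2m"
  shows "(1 - measure G1 {..0}) * c2p - (1 - (1 - measure G1 {..0})) * c2m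
            \<le> (1 - measure G1 {..0})^2
       \<and> (1 - measure G2 {..0}) * c1p - (1 - (1 - measure G2 {..0})) * c1m
            \<le> (1 - measure G2 {..0})^2"
proof -
  interpret G1: prob_space G1 by (rule G1(1))
  have Vc: "closed V" using support_open[OF G1.finite_measure_axioms G1(2)] supp1
    by (simp add: closed_def)
  define g where "g x y = (if x \<in> V \<and> y \<in> V then f x y else 0)" for x y
  have VV: "V \<times> V \<in> sets borel" using Vc by (simp add: closed_Times borel_closed)
  have gm0: "(\<lambda>z. indicator (V \<times> V) z *\<^sub>R (\<lambda>(x, y). f x y) z) \<in> borel_measurable borel"
    using meas by (subst (asm) borel_measurable_restrict_space_iff) (use VV in auto)
  have "(\<lambda>z. indicator (V \<times> V) z *\<^sub>R (\<lambda>(x, y). f x y) z) = (\<lambda>(x,y). g x y)"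
    by (auto simp: g_def indicator_def fun_eq_iff)
  with gm0 have gm: "(\<lambda>(x,y). g x y) \<in> borel_measurable (borel \<Otimes>\<^sub>M borel)"
    by (simp add: borel_prod)
  have gb: "\<And>x y. 0 \<le> g x y \<and> g x y \<le> 1" using range by (simp add: g_def)
  have gz: "\<And>x y. x \<notin> V \<Longrightarrow> g x y = 0" by (simp add: g_def)
  have gs: "\<And>x y. g x y = g y x" using anon by (auto simp: g_def)
  have eq1: "(\<integral>x. g x v \<partial>G1) = (\<integral>x\<in>V. f x v \<partial>G1)" if "v \<in> V" for v
    unfolding set_lebesgue_integral_def
    by (rule Bochner_Integration.integral_cong) (use that in \<open>auto simp: g_def indicator_def\<close>)
  have eq2: "(\<integral>y. g y v \<partial>G2) = (\<integral>y\<in>V. f v y \<partial>G2)" if "v \<in> V" for v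
    unfolding set_lebesgue_integral_def
    by (rule Bochner_Integration.integral_cong) (use that anon in \<open>auto simp: g_def indicator_def\<close>)
  have R1: "(1 - measure G1 {..0}) * c2p - (1 - (1 - measure G1 {..0})) * c2m
            \<le> (1 - measure G1 {..0})^2"
    by (rule key[OF G1 supp1 zero_notin gm gb gz gs]) (simp_all add: eq1 c2p c2m)
  have R2: "(1 - measure G2 {..0}) * c1p - (1 - (1 - measure G2 {..0})) * c1m
            \<le> (1 - measure G2 {..0})^2"
    by (rule key[OF G2 supp2 zero_notin gm gb gz gs]) (simp_all add: eq2 c1p c1m)
  show ?thesis using R1 R2 by simp
qed

end
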